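(* Let $p\ge 1$, let $n_1,\dots,n_p\ge1$ and $k_s\in[n_s]$ for each $s$. Suppose there is a maximum-size non-trivially intersecting family $\mathcal{F}\subseteq \prod_{s}\binom{[n_s]}{k_s}$ which is $Q$-shifted for some $Q\subsetneq [p]$ such that $k_t=1$ for every $t\notin Q$. Then there is a maximum-size non-trivially intersecting family $\mathcal{F}'\subseteq \prod_{s}\binom{[n_s]}{k_s}$ which is shifted.
   Context: Multi-part setting: the ground set is the disjoint union $\bigsqcup_{s=1}^p [n_s]$ of $p$ parts, $[n]=\{1,\dots,n\}$. For $F_s\subseteq[n_s]$, $\bigsqcup_s F_s$ denotes the subset having $F_s$ in part $s$; $\prod_{s}\binom{[n_s]}{k_s}$ is the collection of all $\bigsqcup_s F_s$ with $|F_s|=k_s$ for all $s$. A family is intersecting if any two of its sets intersect (in some part); trivially intersecting if some element (in some part) lies in all its sets; non-trivially intersecting if intersecting but not trivially intersecting. "Maximum-size" means of maximum size among all non-trivially intersecting subfamilies of $\prod_{s}\binom{[n_s]}{k_s}$. Shifting: for $t\in[p]$, $1\le i<j\le n_t$ and $F=\bigsqcup_s F_s$, $S_t^{i,j}(F)=F$ if $i\in F_t$ or $j\notin F_t$, and otherwise $S_t^{i,j}(F)$ replaces $F_t$ by $(F_t\setminus\{j\})\cup\{i\}$. For a family, $S_t^{i,j}(\mathcal F)=\{S_t^{i,j}(F):F\in\mathcal F\}\cup\{F: F\in\mathcal F,\ S_t^{i,j}(F)\in\mathcal F\}$. $\mathcal F$ is $t$-shifted if $S_t^{i,j}(\mathcal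 F)=\mathcal F$ for all $1\le i<j\le n_t$, and shifted if $t$-shifted for all $t\in[p]$. A non-trivially intersecting family $\mathcal F$ is $Q$-shifted (for $Q\subseteq[p]$) if it is $s$-shifted for each $s\in Q$, and for each $s\notin Q$ there are $1\le i_s<j_s\le n_s$ such that $S_s^{i_s,j_s}(\mathcal F)$ is trivially intersecting. *)

theory Defs
  imports Main
begin

(* A subset of the disjoint union of [n_1],...,[n_p] is a set of pairs (s,x),
   meaning element x of part s. *)

definition ground :: "nat \<Rightarrow> (nat \<Rightarrow> nat) \<Rightarrow> (nat \<times> nat) set" where
  "ground p n = {(s,x). s \<in> {1..p} \<and> x \<in> {1..n s}}"

definition part :: "(nat \<times> nat) set \<Rightarrow> nat \<Rightarrow> nat set" where
  "part F s = {x. (s,x) \<in> F}"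

definition prodfam :: "nat \<Rightarrow> (nat \<Rightarrow> nat) \<Rightarrow> (nat \<Rightarrow> nat) \<Rightarrow> (nat \<times> nat) set set" where
  "prodfam p n k = {F. F \<subseteq> ground p n \<and> (\<forall>s\<in>{1..p}. card (part F s) = k s)}"

definition intersecting :: "(nat \<times> nat) set set \<Rightarrow> bool" where
  "intersecting \<F> \<longleftrightarrow> (\<forall>A\<in>\<F>. \<forall>B\<in>\<F>. A \<inter> B \<noteq> {})"

definition triv_intersecting :: "(nat \<times> nat) set set \<Rightarrow> bool" where
  "triv_intersecting \<F> \<longleftrightarrow> (\<exists>e. \<forall>A\<in>\<F>. e \<in> A)"

definition nontriv_intersecting :: "(nat \<times> nat) set set \<Rightarrow> bool" where
  "nontriv_intersecting \<F> \<longleftrightarrow> intersecting \<F> \<and> \<not> triv_intersecting \<F>"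

definition max_nontriv :: "nat \<Rightarrow> (nat \<Rightarrow> nat) \<Rightarrow> (nat \<Rightarrow> nat) \<Rightarrow> (nat \<times> nat) set set \<Rightarrow> bool" where
  "max_nontriv p n k \<F> \<longleftrightarrow> \<F> \<subseteq> prodfam p n k \<and> nontriv_intersecting \<F> \<and>
     (\<forall>\<G>. \<G> \<subseteq> prodfam p n k \<and> nontriv_intersecting \<G> \<longrightarrow> card \<G> \<le> card \<F>)"

definition shift :: "nat \<Rightarrow> nat \<Rightarrow> nat \<Rightarrow> (nat \<times> nat) set \<Rightarrow> (nat \<times> nat) set" where
  "shift t i j F = (if i \<in> part F t \<or> j \<notin> part F t then F
                   else (F - {(t,j)}) \<union> {(t,i)})"

definition shift_fam :: "nat \<Rightarrow> nat \<Rightarrow> nat \<Rightarrow> (nat \<times> nat) set set \<Rightarrow> (nat \<times> nat) set set" where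
  "shift_fam t i j \<F> = shift t i j ` \<F> \<union> {F \<in> \<F>. shift t i j F \<in> \<F>}"

definition t_shifted :: "(nat \<Rightarrow> nat) \<Rightarrow> nat \<Rightarrow> (nat \<times> nat) set set \<Rightarrow> bool" where
  "t_shifted n t \<F> \<longleftrightarrow> (\<forall>i j. 1 \<le> i \<and> i < j \<and> j \<le> n t \<longrightarrow> shift_fam t i j \<F> = \<F>)"

definition shifted :: "nat \<Rightarrow> (nat \<Rightarrow> nat) \<Rightarrow> (nat \<times> nat) set set \<Rightarrow> bool" where
  "shifted p n \<F> \<longleftrightarrow> (\<forall>t\<in>{1..p}. t_shifted n t \<F>)"

definition Q_shifted :: "nat \<Rightarrow> (nat \<Rightarrow> nat) \<Rightarrow> nat set \<Rightarrow> (nat \<times> nat) set set \<Rightarrow> bool" where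
  "Q_shifted p n Q \<F> \<longleftrightarrow> nontriv_intersecting \<F> \<and>
     (\<forall>s\<in>Q. t_shifted n s \<F>) \<and>
     (\<forall>s\<in>{1..p} - Q. \<exists>i j. 1 \<le> i \<and> i < j \<and> j \<le> n s \<and>
          triv_intersecting (shift_fam s i j \<F>))"

end

theory Submission imports Defs begin

lemma part_Un[simp]: "part (X \<union> Y) s = part X s \<union> part Y s"
  by (auto simp: part_def)

lemma mem_part[simp]: "x \<in> part X s \<longleftrightarrow> (s,x) \<in> X"
  by (simp add: part_def)

lemma shift_sub: "shift t a b G \<subseteq> G \<union> {(t,a)}"
  by (auto simp: shift_def)

lemma shift_other: "s' \<noteq> t \<Longrightarrow> (s',x) \<in> shift t a b G \<longleftrightarrow> (s',x) \<in> G"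
  by (auto simp: shift_def)

lemma part_shift: "part (shift t a b G) t =
   (if a \<in> part G t \<or> b \<notin> part G t then part G t else part G t - {b} \<union> {a})"
  by (auto simp: shift_def part_def)

lemma shift_fam_closed: "shift_fam t a b \<F> = \<F> \<Longrightarrow> G \<in> \<F> \<Longrightarrow> shift t a b G \<in> \<F>"
  unfolding shift_fam_def by blast

lemma triv_subset: "triv_intersecting \<G> \<Longrightarrow> \<F> \<subseteq> \<G> \<Longrightarrow> triv_intersecting \<F>"
  unfolding triv_intersecting_def by blast

locale cfg =
  fixes p :: nat and n k :: "nat \<Rightarrow> nat" and Q :: "nat set"
    and F :: "(nat \<times> nat) set set" and i j :: "nat \<Rightarrow> nat"
  assumes kn: "\<forall>s\<in>{1..p}. 1 \<le> k s \<and> k s \<le> n s"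
    and Fsub: "F \<subseteq> prodfam p n k"
    and Fnt: "nontriv_intersecting F"
    and Fmax: "\<forall>\<G>. \<G> \<subseteq> prodfam p n k \<and> nontriv_intersecting \<G> \<longrightarrow> card \<G> \<le> card F"
    and Qsub: "Q \<subseteq> {1..p}"
    and RQ: "Q \<noteq> {1..p}"
    and Qsh: "\<forall>s\<in>Q. t_shifted n s F"
    and Rk: "\<forall>s\<in>{1..p} - Q. k s = 1"
    and Rij: "\<forall>s\<in>{1..p} - Q. 1 \<le> i s \<and> i s < j s \<and> j s \<le> n s \<and>
          triv_intersecting (shift_fam s (i s) (j s) F)"
begin

definition "R = {1..p} - Q"

lemma R_ne: "R \<noteq> {}" using Qsub RQ by (auto simp: R_def)

lemma fin_ground: "finite (ground p n)"
proof -
  have "ground p n \<subseteq> {1..p} \<times> {1..Max (n ` {1..p})}"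
  proof
    fix e assume "e \<in> ground p n"
    then obtain a b where e: "e = (a,b)" "a \<in> {1..p}" "b \<in> {1..n a}" by (auto simp: ground_def)
    have "n a \<le> Max (n ` {1..p})" using e(2) by (intro Max_ge) auto
    hence "b \<le> Max (n ` {1..p})" using e(3) by auto
    thus "e \<in> {1..p} \<times> {1..Max (n ` {1..p})}" using e by auto
  qed
  thus ?thesis by (rule finite_subset) auto
qed

lemma fin_prodfam: "finite (prodfam p n k)"
  by (rule finite_subset[of _ "Pow (ground p n)"]) (auto simp: prodfam_def fin_ground)

lemma finF: "finite F" using Fsub fin_prodfam finite_subset by blast

lemma F_ground: "G \<in> F \<Longrightarrow> G \<subseteq> ground p n" using Fsub by (auto simp: prodfam_def)

lemma F_card: "G \<in> F \<Longrightarrow> s \<in> {1..p} \<Longrightarrow> card (part G s) = k s" using Fsub by (auto simp: prodfam_def)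

lemma F_ne: "F \<noteq> {}" using Fnt by (auto simp: nontriv_intersecting_def triv_intersecting_def)

lemma F_int: "A \<in> F \<Longrightarrow> B \<in> F \<Longrightarrow> A \<inter> B \<noteq> {}" using Fnt by (auto simp: nontriv_intersecting_def intersecting_def)

lemma F_nt: "\<not> triv_intersecting F" using Fnt by (auto simp: nontriv_intersecting_def)

lemma R_props: "s \<in> R \<Longrightarrow> k s = 1 \<and> 1 \<le> i s \<and> i s < j s \<and> j s \<le> n s" using Rk Rij by (auto simp: R_def)

lemma R_sub: "R \<subseteq> {1..p}" by (auto simp: R_def)

lemma single_part: assumes "G \<in> F" "s \<in> R" obtains c where "part G s = {c}"
proof -
  have "card (part G s) = 1" using F_card[OF assms(1)] R_props[OF assms(2)] R_sub assms(2) by auto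
  thus ?thesis using that by (auto simp: card_Suc_eq)
qed

lemma L3: assumes sR: "s \<in> R"
  shows "\<forall>G\<in>F. part G s = {i s} \<or> part G s = {j s}"
    and "\<forall>G\<in>F. part G s = {j s} \<longrightarrow> shift s (i s) (j s) G \<notin> F"
proof -
  let ?S = "shift s (i s) (j s)"
  have ij: "i s < j s" using R_props[OF sR] by simp
  have "triv_intersecting (shift_fam s (i s) (j s) F)" using Rij sR by (auto simp: R_def)
  then obtain e where he: "\<forall>A\<in>shift_fam s (i s) (j s) F. e \<in> A"
    unfolding triv_intersecting_def by blast
  have eS: "e \<in> ?S G" if "G \<in> F" for G using he that by (auto simp: shift_fam_def)
  obtain s' x where e: "e = (s',x)" by force
  have s's: "s' = s"
  proof (rule ccontr)
    assume "s' \<noteq> s"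
    hence "\<forall>G\<in>F. e \<in> G" using eS shift_other e by blast
    thus False using F_nt unfolding triv_intersecting_def by blast
  qed
  have xc: "x = c \<or> (c = j s \<and> x = i s)" if "G \<in> F" "part G s = {c}" for G c
  proof -
    have "x \<in> part (?S G) s" using eS[OF that(1)] e s's by simp
    thus ?thesis using that(2) by (auto simp: part_shift split: if_splits)
  qed
  have xi: "x = i s"
  proof (rule ccontr)
    assume "x \<noteq> i s"
    have "\<forall>G\<in>F. e \<in> G"
    proof
      fix G assume "G \<in> F"
      then obtain c where c: "part G s = {c}" using single_part sR by blast
      hence "x = c" using xc[OF \<open>G \<in> F\<close> c] \<open>x \<noteq> i s\<close> by blast
      thus "e \<in> G" using c e s's by (auto simp: part_def)
    qed
    thus False using F_nt unfolding triv_intersecting_def by blast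
  qed
  show "\<forall>G\<in>F. part G s = {i s} \<or> part G s = {j s}"
  proof
    fix G assume "G \<in> F"
    then obtain c where c: "part G s = {c}" using single_part sR by blast
    thus "part G s = {i s} \<or> part G s = {j s}" using xc[OF \<open>G \<in> F\<close> c] xi by auto
  qed
  show "\<forall>G\<in>F. part G s = {j s} \<longrightarrow> ?S G \<notin> F"
  proof (intro ballI impI notI)
    fix G assume G: "G \<in> F" "part G s = {j s}" "?S G \<in> F"
    hence "G \<in> shift_fam s (i s) (j s) F" by (auto simp: shift_fam_def)
    hence "(s, i s) \<in> G" using he e s's xi by auto
    hence "i s \<in> part G s" by simp
    thus False using G(2) ij by simp
  qed
qed


definition "Qg = {(s,x). s \<in> Q \<and> x \<in> {1..n s}}"
definition "QP = {X. X \<subseteq> Qg \<and> (\<forall>s\<in>Q. card (part X s) = k s)}"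
definition "sig T = (\<lambda>s. (s, if s \<in> T then j s else i s)) ` R"
definition "tau T = (\<lambda>s. (s, if s \<in> T then 2 else 1::nat)) ` R"
definition "FT T = {X\<in>QP. X \<union> sig T \<in> F}"
definition "X0 = {(s,x). s \<in> Q \<and> x \<in> {1..k s}}"
definition "qclosed \<A> \<longleftrightarrow> (\<forall>q\<in>Q. \<forall>a b. 1 \<le> a \<and> a < b \<and> b \<le> n q \<longrightarrow> (\<forall>X\<in>\<A>. shift q a b X \<in> \<A>))"

lemma QR: "Q \<inter> R = {}" by (auto simp: R_def)

lemma part_sig: "part (sig T) s = (if s \<in> R then {if s \<in> T then j s else i s} else {})"
  by (auto simp: sig_def part_def)

lemma part_tau: "part (tau T) s = (if s \<in> R then {if s \<in> T then 2 else 1} else {})"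
  by (auto simp: tau_def part_def)

lemma part_Qg: "X \<subseteq> Qg \<Longrightarrow> s \<notin> Q \<Longrightarrow> part X s = {}"
  by (auto simp: Qg_def part_def)

lemma mem_sig: "(s,x) \<in> sig T \<longleftrightarrow> s \<in> R \<and> x = (if s \<in> T then j s else i s)"
  by (auto simp: sig_def)

lemma mem_tau: "(s,x) \<in> tau T \<longleftrightarrow> s \<in> R \<and> x = (if s \<in> T then 2 else 1)"
  by (auto simp: tau_def)

lemma dec: assumes "G \<in> F" shows "\<exists>X T. T \<subseteq> R \<and> X \<in> QP \<and> G = X \<union> sig T"
proof -
  define X where "X = {e\<in>G. fst e \<in> Q}"
  define T where "T = {s\<in>R. (s, j s) \<in> G}"
  have gr: "G \<subseteq> ground p n" using F_ground assms .
  have XQg: "X \<subseteq> Qg" using gr by (auto simp: X_def Qg_def ground_def)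
  have "G = X \<union> sig T"
  proof (rule set_eqI)
    fix e :: "nat \<times> nat" obtain s x where e: "e = (s,x)" by force
    show "e \<in> G \<longleftrightarrow> e \<in> X \<union> sig T"
    proof (cases "s \<in> Q")
      case True
      thus ?thesis using QR by (auto simp: e X_def mem_sig)
    next
      case False
      show ?thesis
      proof (cases "s \<in> R")
        case True
        have ij: "i s \<noteq> j s" using R_props[OF True] by simp
        have "part G s = {i s} \<or> part G s = {j s}" using L3(1)[OF True] assms by blast
        moreover have "(s,y) \<in> G \<longleftrightarrow> y \<in> part G s" for y by simp
        moreover have "s \<in> T \<longleftrightarrow> (s, j s) \<in> G" using True by (simp add: T_def)
        ultimately have "(s,x) \<in> G \<longleftrightarrow> x = (if s \<in> T then j s else i s)"
          using ij by (metis singleton_iff)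
        thus ?thesis using False True by (auto simp: e X_def mem_sig)
      next
        case False2: False
        have "e \<notin> G" using gr False False2 by (auto simp: e ground_def R_def)
        thus ?thesis using False False2 by (auto simp: e X_def mem_sig)
      qed
    qed
  qed
  moreover have "X \<in> QP"
  proof -
    have "part X s = part G s" if "s \<in> Q" for s using that by (auto simp: X_def)
    thus ?thesis using XQg F_card[OF assms] Qsub by (auto simp: QP_def)
  qed
  moreover have "T \<subseteq> R" by (auto simp: T_def)
  ultimately show ?thesis by blast
qed

lemma Qg_fst: "X \<subseteq> Qg \<Longrightarrow> e \<in> X \<Longrightarrow> fst e \<in> Q" by (auto simp: Qg_def)

lemma uniq_sig: assumes "X \<subseteq> Qg" "X' \<subseteq> Qg" "T \<subseteq> R" "T' \<subseteq> R" "X \<union> sig T = X' \<union> sig T'"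
  shows "X = X' \<and> T = T'"
proof
  have "X = {e \<in> X \<union> sig T. fst e \<in> Q}" using assms(1) QR by (auto simp: Qg_def sig_def)
  moreover have "X' = {e \<in> X' \<union> sig T'. fst e \<in> Q}" using assms(2) QR by (auto simp: Qg_def sig_def)
  ultimately show "X = X'" using assms(5) by simp
  have "T = {s \<in> R. (s, j s) \<in> X \<union> sig T}"
    using assms(1,3) QR R_props by (force simp: Qg_def sig_def)
  moreover have "T' = {s \<in> R. (s, j s) \<in> X' \<union> sig T'}"
    using assms(2,4) QR R_props by (force simp: Qg_def sig_def)
  ultimately show "T = T'" using assms(5) by simp
qed

lemma uniq_tau: assumes "X \<subseteq> Qg" "X' \<subseteq> Qg" "T \<subseteq> R" "T' \<subseteq> R" "X \<union> tau T = X' \<union> tau T'"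
  shows "X = X' \<and> T = T'"
proof
  have "X = {e \<in> X \<union> tau T. fst e \<in> Q}" using assms(1) QR by (auto simp: Qg_def tau_def)
  moreover have "X' = {e \<in> X' \<union> tau T'. fst e \<in> Q}" using assms(2) QR by (auto simp: Qg_def tau_def)
  ultimately show "X = X'" using assms(5) by simp
  have "T = {s \<in> R. (s, 2) \<in> X \<union> tau T}"
    using assms(1,3) QR by (force simp: Qg_def tau_def)
  moreover have "T' = {s \<in> R. (s, 2) \<in> X' \<union> tau T'}"
    using assms(2,4) QR by (force simp: Qg_def tau_def)
  ultimately show "T = T'" using assms(5) by simp
qed

lemma shift_Un: "part Y q = {} \<Longrightarrow> shift q a b (X \<union> Y) = shift q a b X \<union> Y"
  by (auto simp: shift_def part_def)

lemma shift_QP: assumes "X \<in> QP" "q \<in> Q" "1 \<le> a" "a < b" "b \<le> n q"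
  shows "shift q a b X \<in> QP"
proof -
  have XQ: "X \<subseteq> Qg" "\<forall>s\<in>Q. card (part X s) = k s" using assms(1) by (auto simp: QP_def)
  have sub: "shift q a b X \<subseteq> Qg" using XQ(1) assms(2-5) shift_sub[of q a b X] by (auto simp: Qg_def)
  have fin: "finite (part X s)" if "s \<in> Q" for s
    by (rule finite_subset[of _ "{1..n s}"]) (use XQ(1) in \<open>auto simp: Qg_def part_def\<close>)
  have "card (part (shift q a b X) s) = k s" if "s \<in> Q" for s
  proof (cases "s = q")
    case True
    show ?thesis
    proof (cases "a \<in> part X q \<or> b \<notin> part X q")
      case True
      thus ?thesis using XQ(2) \<open>s = q\<close> that by (simp add: part_shift)
    next
      case False
      hence bin: "b \<in> part X q" "a \<notin> part X q" by auto
      have "card (part X q) > 0" using bin fin[OF assms(2)] card_gt_0_iff by blast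
      hence "card (part X q - {b} \<union> {a}) = card (part X q)"
        using fin[OF assms(2)] bin by (simp add: card_insert_if)
      thus ?thesis using False XQ(2) \<open>s = q\<close> that by (simp add: part_shift)
    qed
  next
    case False
    have "part (shift q a b X) s = part X s" using False by (auto simp: part_def shift_other)
    thus ?thesis using XQ(2) that by simp
  qed
  thus ?thesis using sub by (auto simp: QP_def)
qed

lemma FT_closed: "qclosed (FT T)"
  unfolding qclosed_def
proof (intro ballI allI impI)
  fix q a b X assume q: "q \<in> Q" and ab: "1 \<le> a \<and> a < b \<and> b \<le> n q" and X: "X \<in> FT T"
  have "part (sig T) q = {}" using q QR by (auto simp: part_sig)
  hence eq: "shift q a b (X \<union> sig T) = shift q a b X \<union> sig T" by (rule shift_Un)
  have "X \<union> sig T \<in> F" using X by (auto simp: FT_def)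
  hence "shift q a b (X \<union> sig T) \<in> F"
    using Qsh q ab by (auto simp: t_shifted_def intro: shift_fam_closed)
  moreover have "shift q a b X \<in> QP" using X q ab shift_QP by (auto simp: FT_def)
  ultimately show "shift q a b X \<in> FT T" using eq by (auto simp: FT_def)
qed


lemma Qg_ground: "Qg \<subseteq> ground p n" using Qsub by (auto simp: Qg_def ground_def)

lemma fin_Qg: "finite Qg" using Qg_ground fin_ground finite_subset by blast

lemma X0_QP: "X0 \<in> QP"
proof -
  have "X0 \<subseteq> Qg" using kn Qsub by (force simp: X0_def Qg_def)
  moreover have "part X0 s = {1..k s}" if "s \<in> Q" for s using that by (auto simp: X0_def part_def)
  ultimately show ?thesis by (auto simp: QP_def)
qed

lemma KL: assumes A: "\<A> \<subseteq> QP" "\<A> \<noteq> {}" "qclosed \<A>" shows "X0 \<in> \<A>"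
proof -
  define w where "w X = (\<Sum>e\<in>X. snd e)" for X :: "(nat\<times>nat) set"
  obtain Z where "Z \<in> \<A>" using A(2) by blast
  then obtain X where X: "X \<in> \<A>" and minX: "\<forall>Y. Y \<in> \<A> \<longrightarrow> w X \<le> w Y"
    using ex_has_least_nat[of "\<lambda>X. X \<in> \<A>" Z w] by blast
  have XQP: "X \<subseteq> Qg" "\<forall>s\<in>Q. card (part X s) = k s" using X A(1) by (auto simp: QP_def)
  have finX: "finite X" using XQP(1) fin_Qg finite_subset by blast
  have finp: "finite (part X s)" for s
    by (rule finite_subset[of _ "snd ` X"]) (auto intro: finX simp: part_def image_iff intro!: bexI[where x="(s,_)"])
  have allq: "part X q = {1..k q}" if q: "q \<in> Q" for q
  proof (rule ccontr)
    assume ne: "part X q \<noteq> {1..k q}"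
    have cq: "card (part X q) = card {1..k q}" using XQP(2) q by simp
    have "\<not> {1..k q} \<subseteq> part X q" using card_subset_eq[OF finp _ cq[symmetric]] ne by auto
    then obtain a where a: "a \<in> {1..k q}" "a \<notin> part X q" by blast
    have "\<not> part X q \<subseteq> {1..k q}" using card_subset_eq[OF _ _ cq] ne by auto
    then obtain b where b: "b \<in> part X q" "b \<notin> {1..k q}" by blast
    have bn: "1 \<le> b" "b \<le> n q" using b(1) XQP(1) q by (auto simp: Qg_def)
    have ab: "a < b" using a b bn by auto
    have "shift q a b X \<in> \<A>" using A(3) q a ab bn X by (auto simp: qclosed_def)
    moreover have sh: "shift q a b X = insert (q,a) (X - {(q,b)})"
      using a b by (auto simp: shift_def)
    have "w (shift q a b X) < w X"
    proof -
      have "w (shift q a b X) = a + w (X - {(q,b)})"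
        using sh a finX by (simp add: w_def sum.insert)
      moreover have "w X = b + w (X - {(q,b)})"
        using b finX by (simp add: w_def sum.remove)
      ultimately show ?thesis using ab by simp
    qed
    ultimately show False using minX by force
  qed
  have "X = X0"
  proof (rule set_eqI)
    fix e :: "nat \<times> nat" obtain s x where e: "e = (s,x)" by force
    show "e \<in> X \<longleftrightarrow> e \<in> X0"
    proof (cases "s \<in> Q")
      case True
      have "(s,x) \<in> X \<longleftrightarrow> x \<in> part X s" by simp
      thus ?thesis using allq[OF True] True by (auto simp: e X0_def)
    next
      case False
      thus ?thesis using XQP(1) by (auto simp: e X0_def Qg_def)
    qed
  qed
  thus ?thesis using X by simp
qed

lemma sig_ground: "T \<subseteq> R \<Longrightarrow> sig T \<subseteq> ground p n"
  using R_props R_sub by (force simp: sig_def ground_def)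

lemma disagree: assumes "T \<subseteq> R" "T' \<subseteq> R" "T' \<noteq> R - T" shows "\<exists>s\<in>R. (s \<in> T) = (s \<in> T')"
  using assms by blast

lemma sig_meet: assumes "s \<in> R" "(s \<in> T) = (s \<in> T')" shows "sig T \<inter> sig T' \<noteq> {}"
proof -
  have "(s, if s \<in> T then j s else i s) \<in> sig T \<inter> sig T'" using assms by (auto simp: mem_sig)
  thus ?thesis by blast
qed

lemma maxl: assumes T: "T \<subseteq> R" and X: "X \<in> QP" and mt: "\<forall>Y\<in>FT (R - T). X \<inter> Y \<noteq> {}"
  shows "X \<in> FT T"
proof (rule ccontr)
  assume nin: "X \<notin> FT T"
  let ?G = "X \<union> sig T"
  have G0: "?G \<notin> F" using nin X by (auto simp: FT_def)
  have XQ: "X \<subseteq> Qg" "\<forall>s\<in>Q. card (part X s) = k s" using X by (auto simp: QP_def)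
  have Gp: "?G \<in> prodfam p n k"
  proof -
    have "?G \<subseteq> ground p n" using XQ(1) Qg_ground sig_ground[OF T] by auto
    moreover have "card (part ?G s) = k s" if s: "s \<in> {1..p}" for s
    proof (cases "s \<in> Q")
      case True
      thus ?thesis using XQ(2) QR by (auto simp: part_sig)
    next
      case False
      hence "s \<in> R" using s by (auto simp: R_def)
      thus ?thesis using part_Qg[OF XQ(1) False] R_props by (auto simp: part_sig)
    qed
    ultimately show ?thesis by (auto simp: prodfam_def)
  qed
  have gi: "?G \<inter> G \<noteq> {}" if G: "G \<in> F" for G
  proof -
    obtain Y T' where Y: "T' \<subseteq> R" "Y \<in> QP" "G = Y \<union> sig T'" using dec[OF G] by blast
    show ?thesis
    proof (cases "T' = R - T")
      case True
      hence "Y \<in> FT (R - T)" using Y G by (auto simp: FT_def)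
      hence "X \<inter> Y \<noteq> {}" using mt by blast
      thus ?thesis using Y(3) by blast
    next
      case False
      then obtain s where "s \<in> R" "(s \<in> T) = (s \<in> T')" using disagree[OF T Y(1)] by blast
      hence "sig T \<inter> sig T' \<noteq> {}" by (rule sig_meet)
      thus ?thesis using Y(3) by blast
    qed
  qed
  have gg: "?G \<inter> ?G \<noteq> {}"
  proof -
    obtain s where "s \<in> R" using R_ne by blast
    hence "sig T \<inter> sig T \<noteq> {}" by (intro sig_meet) auto
    thus ?thesis by blast
  qed
  have "intersecting (insert ?G F)"
    unfolding intersecting_def using gi gg F_int by (auto simp: Int_commute)
  moreover have "\<not> triv_intersecting (insert ?G F)" using F_nt triv_subset by blast
  moreover have "insert ?G F \<subseteq> prodfam p n k" using Gp Fsub by auto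
  ultimately have "card (insert ?G F) \<le> card F" using Fmax by (auto simp: nontriv_intersecting_def)
  thus False using G0 finF by simp
qed

lemma indep: assumes s: "s \<in> R" and T: "T \<subseteq> R" "s \<notin> T" shows "FT T \<inter> FT (insert s T) = {}"
proof (rule ccontr)
  assume "FT T \<inter> FT (insert s T) \<noteq> {}"
  then obtain X where X: "X \<in> QP" "X \<union> sig T \<in> F" "X \<union> sig (insert s T) \<in> F" by (auto simp: FT_def)
  let ?G = "X \<union> sig (insert s T)"
  have sQ: "s \<notin> Q" using s QR by auto
  have XQ: "X \<subseteq> Qg" using X by (auto simp: QP_def)
  have pG: "part ?G s = {j s}" using part_Qg[OF XQ sQ] s by (simp add: part_sig)
  have ij: "i s \<noteq> j s" using R_props[OF s] by simp
  have "shift s (i s) (j s) ?G = X \<union> sig T"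
  proof -
    have "shift s (i s) (j s) ?G = ?G - {(s, j s)} \<union> {(s, i s)}"
      using pG ij by (simp add: shift_def)
    also have "\<dots> = X \<union> sig T"
    proof (rule set_eqI)
      fix e :: "nat \<times> nat" obtain s' x where e: "e = (s',x)" by force
      have "(s,y) \<notin> X" for y using XQ sQ by (auto simp: Qg_def)
      thus "e \<in> ?G - {(s, j s)} \<union> {(s, i s)} \<longleftrightarrow> e \<in> X \<union> sig T"
        using s T ij by (auto simp: e mem_sig)
    qed
    finally show ?thesis .
  qed
  thus False using L3(2)[OF s] X(2,3) pG by auto
qed

lemma FT_sub: "FT T \<subseteq> QP" by (auto simp: FT_def)

lemma Vind: assumes "s \<in> R" "T \<subseteq> R" "s \<notin> T" "FT T \<noteq> {}" "FT (insert s T) \<noteq> {}" shows False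
proof -
  have "X0 \<in> FT T" "X0 \<in> FT (insert s T)" using KL[OF FT_sub] assms(4,5) FT_closed by auto
  thus False using indep[OF assms(1-3)] by blast
qed

lemma pairne: assumes "T \<subseteq> R" shows "FT T \<noteq> {} \<or> FT (R - T) \<noteq> {}"
  using maxl[OF assms X0_QP] by blast

lemma ntl: assumes s: "s \<in> R"
  shows "\<exists>T. T \<subseteq> R \<and> s \<in> T \<and> FT T \<noteq> {}" "\<exists>T. T \<subseteq> R \<and> s \<notin> T \<and> FT T \<noteq> {}"
proof -
  have "\<not> (\<forall>G\<in>F. (s, i s) \<in> G)" using F_nt unfolding triv_intersecting_def by blast
  then obtain G where G: "G \<in> F" "(s, i s) \<notin> G" by blast
  obtain X T where XT: "T \<subseteq> R" "X \<in> QP" "G = X \<union> sig T" using dec[OF G(1)] by blast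
  have "s \<in> T" using G(2) XT(3) s by (auto simp: mem_sig split: if_splits)
  moreover have "X \<in> FT T" using XT G by (auto simp: FT_def)
  ultimately show "\<exists>T. T \<subseteq> R \<and> s \<in> T \<and> FT T \<noteq> {}" using XT(1) by blast
next
  have "\<not> (\<forall>G\<in>F. (s, j s) \<in> G)" using F_nt unfolding triv_intersecting_def by blast
  then obtain G where G: "G \<in> F" "(s, j s) \<notin> G" by blast
  obtain X T where XT: "T \<subseteq> R" "X \<in> QP" "G = X \<union> sig T" using dec[OF G(1)] by blast
  have "s \<notin> T" using G(2) XT(3) s by (auto simp: mem_sig split: if_splits)
  moreover have "X \<in> FT T" using XT G by (auto simp: FT_def)
  ultimately show "\<exists>T. T \<subseteq> R \<and> s \<notin> T \<and> FT T \<noteq> {}" using XT(1) by blast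
qed

definition "fl T s = (if s \<in> T then T - {s} else insert s T)"

lemma flipV: assumes "T \<subseteq> R" "s \<in> R" "FT T \<noteq> {}" shows "FT (fl T s) = {}"
proof (cases "s \<in> T")
  case True
  have "T = insert s (T - {s})" using True by auto
  thus ?thesis using Vind[of s "T - {s}"] assms True by (auto simp: fl_def)
next
  case False
  thus ?thesis using Vind[of s T] assms by (auto simp: fl_def)
qed

lemma three: "\<exists>a b c. a \<in> R \<and> b \<in> R \<and> c \<in> R \<and> a \<noteq> b \<and> a \<noteq> c \<and> b \<noteq> c"
proof -
  obtain a where a: "a \<in> R" using R_ne by blast
  have "R \<noteq> {a}"
  proof
    assume Ra: "R = {a}"
    obtain T1 where T1: "T1 \<subseteq> R" "a \<notin> T1" "FT T1 \<noteq> {}" using ntl(2)[OF a] by blast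
    obtain T2 where T2: "T2 \<subseteq> R" "a \<in> T2" "FT T2 \<noteq> {}" using ntl(1)[OF a] by blast
    have "T1 = {}" "T2 = {a}" using T1 T2 Ra by auto
    hence "fl T1 a = T2" by (simp add: fl_def)
    thus False using flipV[OF T1(1) a T1(3)] T2(3) by simp
  qed
  then obtain b where b: "b \<in> R" "b \<noteq> a" using a by blast
  have "R \<noteq> {a,b}"
  proof
    assume Rab: "R = {a,b}"
    obtain T1 where T1: "T1 \<subseteq> R" "FT T1 \<noteq> {}" using ntl(1)[OF a] by blast
    have e: "R - fl T1 a = fl T1 b" using T1(1) Rab b(2) by (auto simp: fl_def)
    have "fl T1 a \<subseteq> R" "fl T1 b \<subseteq> R" using T1(1) a b by (auto simp: fl_def)
    thus False using pairne[of "fl T1 a"] flipV[OF T1(1) a T1(2)] flipV[OF T1(1) b(1) T1(2)] e by auto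
  qed
  then obtain c where "c \<in> R" "c \<noteq> a" "c \<noteq> b" using a b by blast
  thus ?thesis using a b by blast
qed


definition "sT T = card (FT T) + card (FT (R - T))"

lemma fin_R: "finite R" using R_sub finite_subset by blast

lemma fin_QP: "finite QP"
  by (rule finite_subset[of _ "Pow Qg"]) (auto simp: QP_def fin_Qg)

lemma fin_FT: "finite (FT T)" using FT_sub fin_QP finite_subset by blast

lemma cross: assumes T: "T \<subseteq> R" and X: "X \<in> FT T" and Y: "Y \<in> FT (R - T)" shows "X \<inter> Y \<noteq> {}"
proof -
  have "(X \<union> sig T) \<inter> (Y \<union> sig (R - T)) \<noteq> {}" using X Y F_int by (auto simp: FT_def)
  moreover have "sig T \<inter> sig (R - T) = {}"
  proof -
    have "\<forall>s\<in>R. i s \<noteq> j s" using R_props by fastforce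
    thus ?thesis by (auto simp: sig_def split: if_splits)
  qed
  moreover have "X \<inter> sig (R - T) = {}" "sig T \<inter> Y = {}" using X Y QR
    by (auto simp: FT_def QP_def Qg_def sig_def)
  ultimately show ?thesis by blast
qed

lemma tau_meet: assumes "s \<in> R" "(s \<in> T) = (s \<in> T')" shows "tau T \<inter> tau T' \<noteq> {}"
proof -
  have "(s, if s \<in> T then 2 else 1) \<in> tau T \<inter> tau T'" using assms by (auto simp: mem_tau)
  thus ?thesis by blast
qed

lemma tau_ground: "T \<subseteq> R \<Longrightarrow> tau T \<subseteq> ground p n"
  using R_props R_sub by (force simp: tau_def ground_def)

lemma shift_fam_eq: "shift t a b ` H \<subseteq> H \<Longrightarrow> shift_fam t a b H = H"
  unfolding shift_fam_def by blast

end


locale cfg2 = cfg +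
  fixes u :: "nat set" and a b c :: nat
  assumes u: "u \<subseteq> R" and umax: "\<forall>T. T \<subseteq> R \<longrightarrow> sT T \<le> sT u"
    and abc: "a \<in> R" "b \<in> R" "c \<in> R" "a \<noteq> b" "a \<noteq> c" "b \<noteq> c"
begin

definition "A = FT u \<union> FT (R - u)"
definition "B = FT u \<inter> FT (R - u)"
definition "L = {T. \<not> ((a \<in> T \<and> b \<in> T) \<or> (a \<in> T \<and> c \<in> T) \<or> (b \<in> T \<and> c \<in> T))}"
definition "H = {X \<union> tau T | X T. T \<subseteq> R \<and> (if T \<in> L then X \<in> A else X \<in> B)}"

lemma Ru: "R - (R - u) = u" using u by auto

lemma AB_cross: "X \<in> A \<Longrightarrow> Y \<in> B \<Longrightarrow> X \<inter> Y \<noteq> {}"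
  unfolding A_def B_def using cross[OF u] cross[of "R - u"] Ru by (auto simp: Int_commute)

lemma BA: "B \<subseteq> A" by (auto simp: A_def B_def)

lemma A_QP: "A \<subseteq> QP" using FT_sub by (auto simp: A_def)

lemma A_cl: "qclosed A" using FT_closed[of u] FT_closed[of "R - u"] by (auto simp: A_def qclosed_def)
lemma B_cl: "qclosed B" using FT_closed[of u] FT_closed[of "R - u"] by (auto simp: B_def qclosed_def)

lemma A_ne: "A \<noteq> {}" using pairne[OF u] by (auto simp: A_def)

lemma A_nocommon: "\<not> (\<forall>X\<in>A. e \<in> X)"
proof
  assume h: "\<forall>X\<in>A. e \<in> X"
  have "X0 \<in> A" using KL[OF A_QP A_ne A_cl] .
  hence eX0: "e \<in> X0" using h by blast
  have "X0 \<in> FT u" using maxl[OF u X0_QP] h eX0 by (auto simp: A_def)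
  have "X0 \<in> FT (R - u)" using maxl[of "R - u", OF _ X0_QP] h eX0 Ru by (auto simp: A_def)
  obtain s where s: "s \<in> R" using R_ne by blast
  have e1: "FT (fl u s) = {}" using flipV[OF u s] \<open>X0 \<in> FT u\<close> by blast
  have e2: "FT (fl (R - u) s) = {}" using flipV[of "R - u" s] s \<open>X0 \<in> FT (R - u)\<close> by blast
  have "R - fl u s = fl (R - u) s" using u s by (auto simp: fl_def)
  moreover have "fl u s \<subseteq> R" using u s by (auto simp: fl_def)
  ultimately show False using pairne[of "fl u s"] e1 e2 by simp
qed

lemma L_compl: "T \<subseteq> R \<Longrightarrow> (R - T \<in> L) = (T \<notin> L)"
  using abc by (auto simp: L_def)

lemma L_down: "T \<in> L \<Longrightarrow> T' \<subseteq> T \<Longrightarrow> T' \<in> L"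
  by (auto simp: L_def)

lemma L_single: "{} \<in> L" "{s} \<in> L" using abc by (auto simp: L_def)

lemma memH: "G \<in> H \<longleftrightarrow> (\<exists>X T. T \<subseteq> R \<and> G = X \<union> tau T \<and> (if T \<in> L then X \<in> A else X \<in> B))"
  by (auto simp: H_def)

lemma H_prod: "H \<subseteq> prodfam p n k"
proof
  fix G assume "G \<in> H"
  then obtain X T where XT: "T \<subseteq> R" "G = X \<union> tau T" "X \<in> A"
    using BA by (auto simp: memH split: if_splits)
  have XQ: "X \<subseteq> Qg" "\<forall>s\<in>Q. card (part X s) = k s" using XT(3) A_QP by (auto simp: QP_def)
  have "G \<subseteq> ground p n" using XQ(1) Qg_ground tau_ground[OF XT(1)] XT(2) by auto
  moreover have "card (part G s) = k s" if s: "s \<in> {1..p}" for s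
  proof (cases "s \<in> Q")
    case True
    thus ?thesis using XQ(2) QR XT(2) by (auto simp: part_tau)
  next
    case False
    hence "s \<in> R" using s by (auto simp: R_def)
    thus ?thesis using part_Qg[OF XQ(1) False] R_props XT(2) by (auto simp: part_tau)
  qed
  ultimately show "G \<in> prodfam p n k" by (auto simp: prodfam_def)
qed

lemma H_int: "intersecting H"
  unfolding intersecting_def
proof (intro ballI)
  fix G1 G2 assume "G1 \<in> H" "G2 \<in> H"
  then obtain X T Y T' where XT: "T \<subseteq> R" "G1 = X \<union> tau T" "if T \<in> L then X \<in> A else X \<in> B"
    and YT: "T' \<subseteq> R" "G2 = Y \<union> tau T'" "if T' \<in> L then Y \<in> A else Y \<in> B"
    by (auto simp: memH)
  show "G1 \<inter> G2 \<noteq> {}"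
  proof (cases "T' = R - T")
    case True
    show ?thesis
    proof (cases "T \<in> L")
      case True
      hence "T' \<notin> L" using L_compl[OF XT(1)] \<open>T' = R - T\<close> by simp
      hence "X \<inter> Y \<noteq> {}" using AB_cross XT(3) YT(3) \<open>T \<in> L\<close> by simp
      thus ?thesis using XT(2) YT(2) by blast
    next
    case False
      hence "T' \<in> L" using L_compl[OF XT(1)] \<open>T' = R - T\<close> by simp
      hence "Y \<inter> X \<noteq> {}" using AB_cross XT(3) YT(3) \<open>T \<notin> L\<close> by simp
      thus ?thesis using XT(2) YT(2) by blast
    qed
  next
    case False
    then obtain s where "s \<in> R" "(s \<in> T) = (s \<in> T')" using disagree[OF XT(1) YT(1)] by blast
    hence "tau T \<inter> tau T' \<noteq> {}" by (rule tau_meet)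
    thus ?thesis using XT(2) YT(2) by blast
  qed
qed

lemma H_nt: "\<not> triv_intersecting H"
proof
  assume "triv_intersecting H"
  then obtain e where he: "\<forall>G\<in>H. e \<in> G" unfolding triv_intersecting_def by blast
  obtain s x where e: "e = (s,x)" by force
  obtain X1 where X1: "X1 \<in> A" using A_ne by blast
  have inH: "X \<union> tau T \<in> H" if "X \<in> A" "T \<subseteq> R" "T \<in> L" for X T
    using that by (auto simp: memH)
  have nR: "(s,y) \<notin> X" if "X \<in> A" "s \<in> R" for X y
    using that A_QP QR by (auto simp: QP_def Qg_def)
  show False
  proof (cases "s \<in> R")
    case True
    have "e \<in> X1 \<union> tau {}" using he inH[OF X1 _ L_single(1)] by auto
    hence "x = 1" using nR[OF X1 True] e by (auto simp: mem_tau)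
    moreover have "e \<in> X1 \<union> tau {s}" using he inH[OF X1 _ L_single(2)] True by auto
    ultimately show False using nR[OF X1 True] e by (auto simp: mem_tau)
  next
    case False
    have "\<forall>X\<in>A. e \<in> X"
    proof
      fix X assume "X \<in> A"
      have "e \<in> X \<union> tau {}" using he inH[OF \<open>X \<in> A\<close> _ L_single(1)] by auto
      thus "e \<in> X" using False e by (auto simp: mem_tau)
    qed
    thus False using A_nocommon by blast
  qed
qed

lemma H_shifted: "shifted p n H"
  unfolding shifted_def t_shifted_def
proof (intro ballI allI impI shift_fam_eq subsetI)
  fix t a' b' G' assume t: "t \<in> {1..p}" and ab: "1 \<le> a' \<and> a' < b' \<and> b' \<le> n t"
    and "G' \<in> shift t a' b' ` H"
  then obtain G where G: "G \<in> H" "G' = shift t a' b' G" by blast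
  then obtain X T where XT: "T \<subseteq> R" "G = X \<union> tau T" "if T \<in> L then X \<in> A else X \<in> B"
    by (auto simp: memH)
  have XQ: "X \<subseteq> Qg" using XT(3) BA A_QP by (auto simp: QP_def split: if_splits)
  show "G' \<in> H"
  proof (cases "t \<in> Q")
    case True
    have "part (tau T) t = {}" using True QR by (auto simp: part_tau)
    hence "G' = shift t a' b' X \<union> tau T" using G(2) XT(2) shift_Un by simp
    moreover have "if T \<in> L then shift t a' b' X \<in> A else shift t a' b' X \<in> B"
      using XT(3) A_cl B_cl True ab by (auto simp: qclosed_def split: if_splits)
    ultimately show ?thesis unfolding memH using XT(1) by blast
  next
    case False
    hence tR: "t \<in> R" using t by (auto simp: R_def)
    have pX: "part X t = {}" using part_Qg[OF XQ False] .
    have pG: "part G t = {if t \<in> T then 2 else 1}" using pX tR XT(2) by (simp add: part_tau)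
    show ?thesis
    proof (cases "a' \<in> part G t \<or> b' \<notin> part G t")
      case True
      hence "G' = G" using G(2) by (simp add: shift_def)
      thus ?thesis using G(1) by simp
    next
      case False
      hence tT: "t \<in> T" and a1: "a' = 1" and b2: "b' = 2" using pG ab by (auto split: if_splits)
      have "G' = G - {(t, 2)} \<union> {(t, 1)}" using G(2) False a1 b2 by (simp add: shift_def)
      also have "\<dots> = X \<union> tau (T - {t})"
      proof (rule set_eqI)
        fix e :: "nat \<times> nat" obtain s y where e: "e = (s,y)" by force
        have "(t,z) \<notin> X" for z using pX by (metis empty_iff mem_part)
        thus "e \<in> G - {(t, 2)} \<union> {(t, 1)} \<longleftrightarrow> e \<in> X \<union> tau (T - {t})"
          using XT(2) tT tR by (auto simp: e mem_tau)
      qed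
      finally have G'e: "G' = X \<union> tau (T - {t})" .
      have "if T - {t} \<in> L then X \<in> A else X \<in> B"
        using XT(3) BA L_down[of T "T - {t}"] by (auto split: if_splits)
      moreover have "T - {t} \<subseteq> R" using XT(1) by blast
      ultimately show ?thesis unfolding memH using G'e by blast
    qed
  qed
qed

definition "C T = (if T \<in> L then A else B)"

lemma memC: "G \<in> H \<longleftrightarrow> (\<exists>X T. T \<subseteq> R \<and> G = X \<union> tau T \<and> X \<in> C T)"
  unfolding memH C_def by (metis (full_types))

lemma C_Qg: "X \<in> C T \<Longrightarrow> X \<subseteq> Qg"
  using BA A_QP by (auto simp: C_def QP_def split: if_splits)

lemma C_fin: "finite (C T)"
  using A_QP BA fin_QP finite_subset by (auto simp: C_def)

lemma card_H0: "card H = (\<Sum>T\<in>Pow R. card (C T))"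
proof -
  have Heq: "H = (\<Union>T\<in>Pow R. (\<lambda>X. X \<union> tau T) ` C T)"
  proof
    show "H \<subseteq> (\<Union>T\<in>Pow R. (\<lambda>X. X \<union> tau T) ` C T)"
    proof
      fix G assume "G \<in> H"
      then obtain X T where XT: "T \<subseteq> R" "G = X \<union> tau T" "X \<in> C T"
        unfolding memC by blast
      thus "G \<in> (\<Union>T\<in>Pow R. (\<lambda>X. X \<union> tau T) ` C T)" by blast
    qed
    show "(\<Union>T\<in>Pow R. (\<lambda>X. X \<union> tau T) ` C T) \<subseteq> H"
    proof
      fix G assume "G \<in> (\<Union>T\<in>Pow R. (\<lambda>X. X \<union> tau T) ` C T)"
      then obtain X T where XT: "T \<subseteq> R" "G = X \<union> tau T" "X \<in> C T" by blast
      thus "G \<in> H" unfolding memC by blast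
    qed
  qed
  have "card H = (\<Sum>T\<in>Pow R. card ((\<lambda>X. X \<union> tau T) ` C T))"
    unfolding Heq
  proof (rule card_UN_disjoint)
    show "finite (Pow R)" using fin_R by simp
    show "\<forall>T\<in>Pow R. finite ((\<lambda>X. X \<union> tau T) ` C T)" using C_fin by auto
    show "\<forall>T\<in>Pow R. \<forall>T'\<in>Pow R. T \<noteq> T' \<longrightarrow>
      (\<lambda>X. X \<union> tau T) ` C T \<inter> (\<lambda>X. X \<union> tau T') ` C T' = {}"
    proof (intro ballI impI)
      fix T T' assume T: "T \<in> Pow R" "T' \<in> Pow R" "T \<noteq> T'"
      show "(\<lambda>X. X \<union> tau T) ` C T \<inter> (\<lambda>X. X \<union> tau T') ` C T' = {}"
      proof (rule ccontr)
        assume "\<not> ?thesis"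
        then obtain X Y where XY: "X \<in> C T" "Y \<in> C T'" "X \<union> tau T = Y \<union> tau T'" by blast
        have "T \<subseteq> R" "T' \<subseteq> R" using T by auto
        hence "T = T'" using uniq_tau[OF C_Qg[OF XY(1)] C_Qg[OF XY(2)] _ _ XY(3)] by blast
        thus False using T by simp
      qed
    qed
  qed
  also have "\<dots> = (\<Sum>T\<in>Pow R. card (C T))"
  proof (rule sum.cong[OF refl])
    fix T assume T: "T \<in> Pow R"
    have "inj_on (\<lambda>X. X \<union> tau T) (C T)"
    proof (rule inj_onI)
      fix X Y assume "X \<in> C T" "Y \<in> C T" "X \<union> tau T = Y \<union> tau T"
      thus "X = Y" using uniq_tau[OF C_Qg C_Qg, of X T Y T T] T by blast
    qed
    thus "card ((\<lambda>X. X \<union> tau T) ` C T) = card (C T)"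
      by (rule card_image)
  qed
  finally show ?thesis .
qed

lemma card_H: "card H = (\<Sum>T\<in>Pow R. card (if T \<in> L then A else B))"
  unfolding card_H0 C_def ..

lemma card_F: "card F = (\<Sum>T\<in>Pow R. card (FT T))"
proof -
  have Feq: "F = (\<Union>T\<in>Pow R. (\<lambda>X. X \<union> sig T) ` FT T)"
  proof
    show "F \<subseteq> (\<Union>T\<in>Pow R. (\<lambda>X. X \<union> sig T) ` FT T)"
    proof
      fix G assume G: "G \<in> F"
      then obtain X T where XT: "T \<subseteq> R" "X \<in> QP" "G = X \<union> sig T" using dec by blast
      hence "X \<in> FT T" using G by (simp add: FT_def)
      thus "G \<in> (\<Union>T\<in>Pow R. (\<lambda>X. X \<union> sig T) ` FT T)" using XT by blast
    qed
    show "(\<Union>T\<in>Pow R. (\<lambda>X. X \<union> sig T) ` FT T) \<subseteq> F" by (auto simp: FT_def)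
  qed
  have QgA: "X \<subseteq> Qg" if "X \<in> FT T" for X T
    using that by (auto simp: FT_def QP_def)
  have "card (\<Union>T\<in>Pow R. (\<lambda>X. X \<union> sig T) ` FT T) = (\<Sum>T\<in>Pow R. card ((\<lambda>X. X \<union> sig T) ` FT T))"
  proof (rule card_UN_disjoint)
    show "finite (Pow R)" using fin_R by simp
    show "\<forall>T\<in>Pow R. finite ((\<lambda>X. X \<union> sig T) ` FT T)" using fin_FT by auto
    show "\<forall>T\<in>Pow R. \<forall>T'\<in>Pow R. T \<noteq> T' \<longrightarrow>
      (\<lambda>X. X \<union> sig T) ` FT T \<inter> (\<lambda>X. X \<union> sig T') ` FT T' = {}"
    proof (intro ballI impI)
      fix T T' assume T: "T \<in> Pow R" "T' \<in> Pow R" "T \<noteq> T'"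
      show "(\<lambda>X. X \<union> sig T) ` FT T \<inter> (\<lambda>X. X \<union> sig T') ` FT T' = {}"
      proof (rule ccontr)
        assume "\<not> ?thesis"
        then obtain X Y where XY: "X \<in> FT T" "Y \<in> FT T'" "X \<union> sig T = Y \<union> sig T'" by blast
        have "T \<subseteq> R" "T' \<subseteq> R" using T by auto
        hence "T = T'" using uniq_sig[OF QgA[OF XY(1)] QgA[OF XY(2)] _ _ XY(3)] by blast
        thus False using T by simp
      qed
    qed
  qed
  also have "\<dots> = (\<Sum>T\<in>Pow R. card (FT T))"
  proof (rule sum.cong[OF refl])
    fix T assume "T \<in> Pow R"
    have "inj_on (\<lambda>X. X \<union> sig T) (FT T)"
    proof (rule inj_onI)
      fix X Y assume "X \<in> FT T" "Y \<in> FT T" "X \<union> sig T = Y \<union> sig T"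
      thus "X = Y" using uniq_sig[OF QgA QgA, of X T Y T T] \<open>T \<in> Pow R\<close> by blast
    qed
    thus "card ((\<lambda>X. X \<union> sig T) ` FT T) = card (FT T)" by (rule card_image)
  qed
  finally show ?thesis using Feq by simp
qed

lemma split_sum: "(\<Sum>T\<in>Pow R. f T) = (\<Sum>T\<in>Pow R \<inter> L. f T) + (\<Sum>T\<in>Pow R \<inter> L. f (R - T))"
proof -
  have "(\<Sum>T\<in>Pow R. f T) = (\<Sum>T\<in>Pow R \<inter> L. f T) + (\<Sum>T\<in>Pow R - L. f T)"
  proof -
    have "Pow R - Pow R \<inter> L = Pow R - L" by blast
    thus ?thesis using fin_R sum.subset_diff[of "Pow R \<inter> L" "Pow R" f] by (simp add: add.commute)
  qed
  moreover have "(\<Sum>T\<in>Pow R - L. f T) = (\<Sum>T\<in>Pow R \<inter> L. f (R - T))"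
  proof (rule sum.reindex_bij_betw[symmetric])
    show "bij_betw (\<lambda>T. R - T) (Pow R \<inter> L) (Pow R - L)"
    proof (rule bij_betw_byWitness[where f'="\<lambda>T. R - T"])
      show "\<forall>T\<in>Pow R \<inter> L. R - (R - T) = T" by auto
      show "\<forall>T\<in>Pow R - L. R - (R - T) = T" by auto
      show "(\<lambda>T. R - T) ` (Pow R \<inter> L) \<subseteq> Pow R - L"
        using L_compl by (auto simp: Diff_Diff_Int)
      show "(\<lambda>T. R - T) ` (Pow R - L) \<subseteq> Pow R \<inter> L"
        using L_compl by auto
    qed
  qed
  ultimately show ?thesis by simp
qed

lemma card_le: "card F \<le> card H"
proof -
  have fA: "finite (FT u)" "finite (FT (R - u))" using fin_FT by auto
  have sAB: "card A + card B = sT u"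
    unfolding A_def B_def sT_def using card_Un_Int[OF fA] by simp
  have "card F = (\<Sum>T\<in>Pow R \<inter> L. sT T)"
    unfolding card_F split_sum[of "\<lambda>T. card (FT T)"] sT_def by (simp add: sum.distrib)
  also have "\<dots> \<le> (\<Sum>T\<in>Pow R \<inter> L. card A + card B)"
    using umax sAB by (intro sum_mono) auto
  also have "\<dots> = card H"
  proof -
    have "card H = (\<Sum>T\<in>Pow R \<inter> L. card (if T \<in> L then A else B)) +
                   (\<Sum>T\<in>Pow R \<inter> L. card (if R - T \<in> L then A else B))"
      unfolding card_H by (rule split_sum)
    also have "\<dots> = (\<Sum>T\<in>Pow R \<inter> L. card A) + (\<Sum>T\<in>Pow R \<inter> L. card B)"
      using L_compl by (intro arg_cong2[where f="(+)"] sum.cong) auto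
    finally show ?thesis by (simp add: sum.distrib algebra_simps)
  qed
  finally show ?thesis .
qed

lemma H_max: "max_nontriv p n k H"
  unfolding max_nontriv_def nontriv_intersecting_def
  using H_prod H_int H_nt card_le Fmax by (auto simp: nontriv_intersecting_def)

end

context cfg begin

lemma main: "\<exists>H. max_nontriv p n k H \<and> shifted p n H"
proof -
  obtain a b c where abc: "a \<in> R" "b \<in> R" "c \<in> R" "a \<noteq> b" "a \<noteq> c" "b \<noteq> c" using three by blast
  have fin: "finite (sT ` Pow R)" using fin_R by simp
  have ne: "sT ` Pow R \<noteq> {}" by blast
  obtain u where u: "u \<in> Pow R" "sT u = Max (sT ` Pow R)" using Max_in[OF fin ne] by auto
  have umax: "\<forall>T. T \<subseteq> R \<longrightarrow> sT T \<le> sT u" using u fin by auto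
  interpret c2: cfg2 p n k Q F i j u a b c
    by unfold_locales (use u umax abc in auto)
  show ?thesis using c2.H_max c2.H_shifted by blast
qed

end

theorem lemma2p4:
  fixes p :: nat and n k :: "nat \<Rightarrow> nat" and Q :: "nat set"
    and \<F> :: "(nat \<times> nat) set set"
  assumes "p \<ge> 1"
    and "\<forall>s\<in>{1..p}. n s \<ge> 1"
    and "\<forall>s\<in>{1..p}. 1 \<le> k s \<and> k s \<le> n s"
    and "max_nontriv p n k \<F>"
    and "Q \<subset> {1..p}"
    and "Q_shifted p n Q \<F>"
    and "\<forall>t\<in>{1..p} - Q. k t = 1"
  shows "\<exists>\<F>'. max_nontriv p n k \<F>' \<and> shifted p n \<F>'"
proof -
  have "\<forall>s\<in>{1..p} - Q. \<exists>ij. 1 \<le> fst ij \<and> fst ij < snd ij \<and> snd ij \<le> n s \<and>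
          triv_intersecting (shift_fam s (fst ij) (snd ij) \<F>)"
    using assms(6) unfolding Q_shifted_def by fastforce
  then obtain g where g: "\<forall>s\<in>{1..p} - Q. 1 \<le> fst (g s) \<and> fst (g s) < snd (g s) \<and> snd (g s) \<le> n s \<and>
          triv_intersecting (shift_fam s (fst (g s)) (snd (g s)) \<F>)"
    by metis
  interpret cfg p n k Q \<F> "\<lambda>s. fst (g s)" "\<lambda>s. snd (g s)"
  proof
    show "\<forall>s\<in>{1..p}. 1 \<le> k s \<and> k s \<le> n s" using assms(3) .
    show "\<F> \<subseteq> prodfam p n k" using assms(4) by (simp add: max_nontriv_def)
    show "nontriv_intersecting \<F>" using assms(4) by (simp add: max_nontriv_def)
    show "\<forall>\<G>. \<G> \<subseteq> prodfam p n k \<and> nontriv_intersecting \<G> \<longrightarrow> card \<G> \<le> card \<F>"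
      using assms(4) by (simp add: max_nontriv_def)
    show "Q \<subseteq> {1..p}" "Q \<noteq> {1..p}" using assms(5) by auto
    show "\<forall>s\<in>Q. t_shifted n s \<F>" using assms(6) by (simp add: Q_shifted_def)
    show "\<forall>s\<in>{1..p} - Q. k s = 1" using assms(7) .
    show "\<forall>s\<in>{1..p} - Q. 1 \<le> fst (g s) \<and> fst (g s) < snd (g s) \<and> snd (g s) \<le> n s \<and>
          triv_intersecting (shift_fam s (fst (g s)) (snd (g s)) \<F>)" using g .
  qed
  show ?thesis using main .
qed

end
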